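(* Let $n\geq7$ and let $u,v$ be monomials such that $x_{n-1}u\in\mathcal A$ and $x_nv\in\mathcal C$. If $uv\in G(J(P_{n-2})^2)$, then $x_{n-1}x_nuv\in G(J(P_n)^2)$.
   Context: For $m\geq 1$, $P_m$ is the path graph on vertices $x_1,\ldots,x_m$ with edges $\{x_i,x_{i+1}\}$; $J(P_m)$ is its cover ideal (generated by $\prod_{x\in C}x$, $C$ a minimal vertex cover) and $G(I)$ denotes minimal monomial generators. The rooted list $\mathcal R(P_m)$: $\mathcal R(P_1)$ empty; $\mathcal R(P_2)=x_1,x_2$; $\mathcal R(P_3)=x_2,x_1x_3$; $\mathcal R(P_4)=x_1x_3,x_2x_3,x_2x_4$; for $m\geq5$, if $\mathcal R(P_{m-2})=u_1,\ldots,u_r$ and $\mathcal R(P_{m-3})=v_1,\ldots,v_s$, then $\mathcal R(P_m)=x_{m-1}u_1,\ldots,x_{m-1}u_r,x_mx_{m-2}v_1,\ldots,x_mx_{m-2}v_s$; it lists each element of $G(J(P_m))$ once. For $n\geq7$: $\mathcal A$ is the sublist of $\mathcal R(P_n)$ of elements divisible by $x_{n-1}x_{n-3}$ (equivalently $x_{n-1}x_{n-3}w$, $w\in\mathcal R(P_{n-4})$), and $\mathcal C$ is the sublist of elements divisible by $x_nx_{n-4}$ (equivalently $x_nx_{n-2}x_{n-4}w$, $w\in\mathcal R(P_{n-5})$). *)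

theory Defs
  imports Main
begin

text \<open>Monomials in the variables x_1, x_2, ... are represented by their exponent
  vectors nat => nat (u i = exponent of x_i).  Monomial ideals are represented by
  the set of monomials they contain.\<close>

type_synonym monomial = "nat \<Rightarrow> nat"

definition mmul :: "monomial \<Rightarrow> monomial \<Rightarrow> monomial" where
  "mmul u v = (\<lambda>i. u i + v i)"

definition mdvd :: "monomial \<Rightarrow> monomial \<Rightarrow> bool" where
  "mdvd u v \<longleftrightarrow> (\<forall>i. u i \<le> v i)"

definition var :: "nat \<Rightarrow> monomial" where
  "var i = (\<lambda>j. if j = i then 1 else 0)"

definition mideal :: "monomial set \<Rightarrow> monomial set" where
  "mideal S = {w. \<exists>s\<in>S. mdvd s w}"

definition mideal_prod :: "monomial set \<Rightarrow> monomial set \<Rightarrow> monomial set" where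
  "mideal_prod I J = mideal {mmul a b | a b. a \<in> I \<and> b \<in> J}"

definition mideal_sq :: "monomial set \<Rightarrow> monomial set" where
  "mideal_sq I = mideal_prod I I"

text \<open>G(I): minimal monomial generators = divisibility-minimal monomials of I\<close>
definition mgens :: "monomial set \<Rightarrow> monomial set" where
  "mgens I = {w \<in> I. \<forall>w'\<in>I. mdvd w' w \<longrightarrow> w' = w}"

definition is_vertex_cover_path :: "nat \<Rightarrow> nat set \<Rightarrow> bool" where
  "is_vertex_cover_path m C \<longleftrightarrow> C \<subseteq> {1..m} \<and> (\<forall>i. 1 \<le> i \<and> i < m \<longrightarrow> i \<in> C \<or> i + 1 \<in> C)"

definition is_min_vertex_cover_path :: "nat \<Rightarrow> nat set \<Rightarrow> bool" where
  "is_min_vertex_cover_path m C \<longleftrightarrow> is_vertex_cover_path m C \<and>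
     (\<forall>D. D \<subset> C \<longrightarrow> \<not> is_vertex_cover_path m D)"

definition set_monomial :: "nat set \<Rightarrow> monomial" where
  "set_monomial C = (\<lambda>j. if j \<in> C then 1 else 0)"

definition cover_ideal_path :: "nat \<Rightarrow> monomial set" where
  "cover_ideal_path m = mideal {set_monomial C | C. is_min_vertex_cover_path m C}"

fun rooted :: "nat \<Rightarrow> monomial list" where
  "rooted 0 = []"
| "rooted (Suc 0) = []"
| "rooted (Suc (Suc 0)) = [var 1, var 2]"
| "rooted (Suc (Suc (Suc 0))) = [var 2, mmul (var 1) (var 3)]"
| "rooted (Suc (Suc (Suc (Suc 0)))) =
     [mmul (var 1) (var 3), mmul (var 2) (var 3), mmul (var 2) (var 4)]"
| "rooted (Suc (Suc (Suc (Suc (Suc k))))) =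
     map (mmul (var (k + 4))) (rooted (k + 3)) @
     map (mmul (mmul (var (k + 5)) (var (k + 3)))) (rooted (k + 2))"

definition listA :: "nat \<Rightarrow> monomial list" where
  "listA n = filter (\<lambda>w. mdvd (mmul (var (n - 1)) (var (n - 3))) w) (rooted n)"

definition listC :: "nat \<Rightarrow> monomial list" where
  "listC n = filter (\<lambda>w. mdvd (mmul (var n) (var (n - 4))) w) (rooted n)"

end

theory Submission
  imports Defs
begin

definition covers :: "nat \<Rightarrow> monomial \<Rightarrow> bool" where
  "covers m w \<longleftrightarrow> (\<forall>i. 1 \<le> i \<and> i < m \<longrightarrow> w i \<noteq> 0 \<or> w (Suc i) \<noteq> 0)"

lemma rooted_covers: "w \<in> set (rooted m) \<Longrightarrow> covers m w"
proof (induction m arbitrary: w rule: rooted.induct)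
  case 1 then show ?case by simp
next
  case 2 then show ?case by simp
next
  case 3 then show ?case by (auto simp: covers_def var_def)
next
  case 4 then show ?case by (auto simp: covers_def var_def mmul_def less_Suc_eq)
next
  case 5 then show ?case by (auto simp: covers_def var_def mmul_def less_Suc_eq)
next
  case (6 k)
  from "6.prems" consider (a) u where "u \<in> set (rooted (k+3))" "w = mmul (var (k + 4)) u"
    | (b) u where "u \<in> set (rooted (k+2))" "w = mmul (mmul (var (k + 5)) (var (k + 3))) u"
    by auto
  then show ?case
  proof cases
    case a
    with "6.IH"(1) have c: "covers (k+3) u" by simp
    show ?thesis unfolding covers_def
    proof (intro allI impI)
      fix i assume "1 \<le> i \<and> i < Suc (Suc (Suc (Suc (Suc k))))"
      then consider "i < k+3" | "i = k+3" | "i = k+4" by linarith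
      then show "w i \<noteq> 0 \<or> w (Suc i) \<noteq> 0"
        using c \<open>1 \<le> i \<and> _\<close> unfolding covers_def a(2) mmul_def var_def
        by cases auto
    qed
  next
    case b
    with "6.IH"(2) have c: "covers (k+2) u" by simp
    show ?thesis unfolding covers_def
    proof (intro allI impI)
      fix i assume "1 \<le> i \<and> i < Suc (Suc (Suc (Suc (Suc k))))"
      then consider "i < k+2" | "i = k+2" | "i = k+3" | "i = k+4" by linarith
      then show "w i \<noteq> 0 \<or> w (Suc i) \<noteq> 0"
        using c \<open>1 \<le> i \<and> _\<close> unfolding covers_def b(2) mmul_def var_def
        by cases auto
    qed
  qed
qed

lemma min_cover_exists:
  assumes "finite D" "is_vertex_cover_path m D"
  shows "\<exists>C\<subseteq>D. is_min_vertex_cover_path m C"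
  using assms
proof (induction D rule: finite_psubset_induct)
  case (psubset A)
  show ?case
  proof (cases "is_min_vertex_cover_path m A")
    case True then show ?thesis by (intro exI[of _ A]) simp
  next
    case False
    then obtain B where B: "B \<subset> A" "is_vertex_cover_path m B"
      using psubset.prems unfolding is_min_vertex_cover_path_def by auto
    obtain C where "C \<subseteq> B" "is_min_vertex_cover_path m C"
      using psubset.IH[OF B] by auto
    then show ?thesis using B(1) by (intro exI[of _ C]) auto
  qed
qed

lemma covers_in_ideal:
  assumes "covers m w"
  shows "w \<in> cover_ideal_path m"
proof -
  define D where "D = {i \<in> {1..m}. w i \<noteq> 0}"
  have "finite D" unfolding D_def by simp
  moreover have "is_vertex_cover_path m D"
    using assms unfolding is_vertex_cover_path_def covers_def D_def by auto
  ultimately obtain C where C: "C \<subseteq> D" "is_min_vertex_cover_path m C"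
    using min_cover_exists by blast
  have "mdvd (set_monomial C) w"
    using C(1) unfolding mdvd_def set_monomial_def D_def by auto
  then show ?thesis using C(2) unfolding cover_ideal_path_def mideal_def by blast
qed

lemma ideal_covers:
  assumes "is_min_vertex_cover_path m C"
  shows "covers m (set_monomial C)" "\<And>i. i \<notin> {1..m} \<Longrightarrow> set_monomial C i = 0"
    "\<And>i. set_monomial C i \<le> 1"
  using assms unfolding is_min_vertex_cover_path_def is_vertex_cover_path_def covers_def
    set_monomial_def by auto

lemma covers_at: "covers m w \<Longrightarrow> 1 \<le> i \<Longrightarrow> i < m \<Longrightarrow> w i \<noteq> 0 \<or> w (Suc i) \<noteq> 0"
  unfolding covers_def by blast

lemma mdvd_D: "mdvd u w \<Longrightarrow> u i \<le> w i"
  unfolding mdvd_def by blast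

lemma mdvd_refl: "mdvd w w"
  unfolding mdvd_def by simp

lemma prod_in_sq: "a \<in> I \<Longrightarrow> b \<in> I \<Longrightarrow> mmul a b \<in> mideal_sq I"
  unfolding mideal_sq_def mideal_prod_def mideal_def
  by (rule CollectI, rule bexI[of _ "mmul a b"]) (auto simp: mdvd_refl)

lemma sq_elim: "N \<in> mideal_sq I \<Longrightarrow> \<exists>a b. a \<in> I \<and> b \<in> I \<and> mdvd (mmul a b) N"
  unfolding mideal_sq_def mideal_prod_def mideal_def by auto

lemma cover_elim: "w \<in> cover_ideal_path m \<Longrightarrow> \<exists>C. is_min_vertex_cover_path m C \<and> mdvd (set_monomial C) w"
  unfolding cover_ideal_path_def mideal_def by auto

theorem lemma3p12:
  fixes n :: nat and u v :: monomial
  assumes "n \<ge> 7"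
    and "mmul (var (n - 1)) u \<in> set (listA n)"
    and "mmul (var n) v \<in> set (listC n)"
    and "mmul u v \<in> mgens (mideal_sq (cover_ideal_path (n - 2)))"
  shows "mmul (mmul (var (n - 1)) (var n)) (mmul u v) \<in> mgens (mideal_sq (cover_ideal_path n))"
proof -
  define M where "M = mmul (mmul (var (n - 1)) (var n)) (mmul u v)"
  have A: "mmul (var (n - 1)) u \<in> cover_ideal_path n"
    using assms(2) rooted_covers covers_in_ideal unfolding listA_def by auto
  have C: "mmul (var n) v \<in> cover_ideal_path n"
    using assms(3) rooted_covers covers_in_ideal unfolding listC_def by auto
  have "M = mmul (mmul (var (n - 1)) u) (mmul (var n) v)"
    unfolding M_def mmul_def by auto
  then have Min: "M \<in> mideal_sq (cover_ideal_path n)"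
    using A C prod_in_sq by simp
  have uv: "mmul u v \<in> mideal_sq (cover_ideal_path (n - 2))"
    and uvmin: "\<And>w'. w' \<in> mideal_sq (cover_ideal_path (n - 2)) \<Longrightarrow> mdvd w' (mmul u v) \<Longrightarrow> w' = mmul u v"
    using assms(4) unfolding mgens_def by auto
  have "N = M" if N: "N \<in> mideal_sq (cover_ideal_path n)" "mdvd N M" for N
  proof -
    obtain a0 b0 where ab0: "a0 \<in> cover_ideal_path n" "b0 \<in> cover_ideal_path n" "mdvd (mmul a0 b0) N"
      using sq_elim[OF N(1)] by blast
    obtain C1 where C1: "is_min_vertex_cover_path n C1" "mdvd (set_monomial C1) a0"
      using cover_elim[OF ab0(1)] by blast
    obtain C2 where C2: "is_min_vertex_cover_path n C2" "mdvd (set_monomial C2) b0"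
      using cover_elim[OF ab0(2)] by blast
    define a where "a = set_monomial C1"
    define b where "b = set_monomial C2"
    have ca: "covers n a" and cb: "covers n b"
      using ideal_covers(1) C1 C2 a_def b_def by auto
    have abN: "a i + b i \<le> N i" for i
    proof -
      have "a i \<le> a0 i" "b i \<le> b0 i" using mdvd_D[OF C1(2)] mdvd_D[OF C2(2)] a_def b_def by auto
      moreover have "mmul a0 b0 i \<le> N i" by (rule mdvd_D[OF ab0(3)])
      ultimately show ?thesis unfolding mmul_def by simp
    qed
    have le: "\<And>i. a i + b i \<le> M i"
      using abN mdvd_D[OF N(2)] order_trans by blast
    have edges: "a (n-1) \<noteq> 0 \<or> a n \<noteq> 0" "b (n-1) \<noteq> 0 \<or> b n \<noteq> 0"
    proof -
      have s: "Suc (n-1) = n" using assms(1) by simp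
      have "1 \<le> n - 1 \<and> n - 1 < n" using assms(1) by simp
      then show "a (n-1) \<noteq> 0 \<or> a n \<noteq> 0" "b (n-1) \<noteq> 0 \<or> b n \<noteq> 0"
        using covers_at[OF ca, of "n-1"] covers_at[OF cb, of "n-1"] s by auto
    qed
    define a' where "a' = (\<lambda>i. if i \<le> n - 2 then a i else 0)"
    define b' where "b' = (\<lambda>i. if i \<le> n - 2 then b i else 0)"
    have "covers (n-2) a'" "covers (n-2) b'"
      using ca cb unfolding covers_def a'_def b'_def by auto
    then have "a' \<in> cover_ideal_path (n-2)" "b' \<in> cover_ideal_path (n-2)"
      using covers_in_ideal by auto
    then have "mmul a' b' \<in> mideal_sq (cover_ideal_path (n - 2))"
      using prod_in_sq by blast
    moreover have "mdvd (mmul a' b') (mmul u v)"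
      unfolding mdvd_def
    proof
      fix i
      show "mmul a' b' i \<le> mmul u v i"
      proof (cases "i \<le> n - 2")
        case True
        then have "M i = mmul u v i" using assms(1) unfolding M_def mmul_def var_def by auto
        then show ?thesis using le[of i] True unfolding mmul_def a'_def b'_def by auto
      qed (simp add: mmul_def a'_def b'_def)
    qed
    ultimately have eq: "mmul a' b' = mmul u v" by (rule uvmin)
    have nle: "\<not> n - 1 \<le> n - 2" "\<not> n \<le> n - 2" "\<not> n - Suc 0 \<le> n - 2" using assms(1) by auto
    have "M i \<le> N i" for i
    proof -
      have NM: "N i \<le> M i" using N(2) unfolding mdvd_def by auto
      consider "i \<le> n - 2" | "i = n - 1" | "i = n" | "i > n" by linarith
      then show ?thesis
      proof cases
        case 1
        then have "M i = mmul u v i" using assms(1) unfolding M_def mmul_def var_def by auto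
        also have "\<dots> = a i + b i" using 1 fun_cong[OF eq, of i] unfolding mmul_def a'_def b'_def
          by simp
        finally show ?thesis using abN by simp
      next
        case 2
        have z1: "u (n-1) + v (n-1) = 0" using fun_cong[OF eq, of "n-1"] nle
          unfolding mmul_def a'_def b'_def by simp
        have z2: "u n + v n = 0" using fun_cong[OF eq, of "n"] nle
          unfolding mmul_def a'_def b'_def by simp
        have "M (n-1) = 1" "M n = 1" using z1 z2 assms(1) unfolding M_def mmul_def var_def by auto
        moreover have "a (n-1) + b (n-1) \<le> 1" "a n + b n \<le> 1" using le[of "n-1"] le[of n] calculation by auto
        moreover have "a (n-1) \<noteq> 0 \<or> a n \<noteq> 0" "b (n-1) \<noteq> 0 \<or> b n \<noteq> 0"
          using edges by auto
        ultimately show ?thesis using 2 abN[of i] by auto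
      next
        case 3
        have z1: "u (n-1) + v (n-1) = 0" using fun_cong[OF eq, of "n-1"] nle
          unfolding mmul_def a'_def b'_def by simp
        have z2: "u n + v n = 0" using fun_cong[OF eq, of "n"] nle
          unfolding mmul_def a'_def b'_def by simp
        have "M (n-1) = 1" "M n = 1" using z1 z2 assms(1) unfolding M_def mmul_def var_def by auto
        moreover have "a (n-1) + b (n-1) \<le> 1" "a n + b n \<le> 1" using le[of "n-1"] le[of n] calculation by auto
        moreover have "a (n-1) \<noteq> 0 \<or> a n \<noteq> 0" "b (n-1) \<noteq> 0 \<or> b n \<noteq> 0"
          using edges by auto
        ultimately show ?thesis using 3 abN[of i] by auto
      next
        case 4
        have "\<not> i \<le> n - 2" using 4 by simp
        have "u i + v i = 0" using fun_cong[OF eq, of i] 4 assms(1) \<open>\<not> i \<le> n - 2\<close>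
          unfolding mmul_def a'_def b'_def by simp
        then have "M i = 0" using 4 unfolding M_def mmul_def var_def by auto
        then show ?thesis by simp
      qed
    qed
    then show ?thesis using mdvd_D[OF N(2)] by (intro ext antisym)
  qed
  then show ?thesis using Min unfolding mgens_def M_def by auto
qed

end
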